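(* Let $G=(V,E,w)$ be a weighted digraph whose underlying graph has maximum degree $\hat{\Delta}$, and let $w_{\max}>0$ be the maximum edge weight. Let $m=\left\lfloor\frac{1-\epsilon}{w_{\max}}\right\rfloor$, i.e. $m$ is the largest integer with $m\,w_{\max}<1$. Then \[\chi_w(G)\le\left\lceil\frac{\hat{\Delta}}{m+1}\right\rceil+1.\]
   Context: A weighted digraph is $G=(V,E,w)$ with $w:E\to[0,1]$; its underlying graph is obtained by ignoring weights and directions. A $k$-coloring is a map $c:V\to\{1,\dots,k\}$, and $c[v]$ denotes the set of vertices with color $c(v)$. For $S\subseteq V$, $d^-_S(v)=\sum_{u\in S,(u,v)\in E}w(u,v)$. A weighted improper $k$-coloring is a $k$-coloring with $d^-_{c[v]}(v)<1$ for every $v$; $\chi_w(G)$ is the minimum $k$ for which one exists. In the paper's notation $\epsilon$ is an arbitrarily small positive quantity, so that $\lfloor(1-\epsilon)/w\rfloor$ is the largest integer $m$ with $mw<1$. *)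

theory Defs
  imports Complex_Main
begin

definition weighted_digraph :: "'a set \<Rightarrow> ('a \<times> 'a) set \<Rightarrow> ('a \<times> 'a \<Rightarrow> real) \<Rightarrow> bool" where
  "weighted_digraph V E w \<longleftrightarrow> finite V \<and> E \<subseteq> V \<times> V \<and> (\<forall>v. (v, v) \<notin> E)
     \<and> (\<forall>e\<in>E. 0 \<le> w e \<and> w e \<le> 1)"

definition und_nbrs :: "('a \<times> 'a) set \<Rightarrow> 'a \<Rightarrow> 'a set" where
  "und_nbrs E v = {u. u \<noteq> v \<and> ((u, v) \<in> E \<or> (v, u) \<in> E)}"

definition und_max_degree :: "'a set \<Rightarrow> ('a \<times> 'a) set \<Rightarrow> nat" where
  "und_max_degree V E = Max ((\<lambda>v. card (und_nbrs E v)) ` V)"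

definition in_wdeg :: "('a \<times> 'a) set \<Rightarrow> ('a \<times> 'a \<Rightarrow> real) \<Rightarrow> 'a set \<Rightarrow> 'a \<Rightarrow> real" where
  "in_wdeg E w S v = (\<Sum>u\<in>{u\<in>S. (u, v) \<in> E}. w (u, v))"

definition color_class :: "'a set \<Rightarrow> ('a \<Rightarrow> nat) \<Rightarrow> 'a \<Rightarrow> 'a set" where
  "color_class V c v = {u\<in>V. c u = c v}"

definition weighted_improper_coloring ::
  "'a set \<Rightarrow> ('a \<times> 'a) set \<Rightarrow> ('a \<times> 'a \<Rightarrow> real) \<Rightarrow> nat \<Rightarrow> ('a \<Rightarrow> nat) \<Rightarrow> bool" where
  "weighted_improper_coloring V E w k c \<longleftrightarrow>
     (\<forall>v\<in>V. c v \<in> {1..k}) \<and> (\<forall>v\<in>V. in_wdeg E w (color_class V c v) v < 1)"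

definition chi_w :: "'a set \<Rightarrow> ('a \<times> 'a) set \<Rightarrow> ('a \<times> 'a \<Rightarrow> real) \<Rightarrow> nat" where
  "chi_w V E w = (LEAST k. \<exists>c. weighted_improper_coloring V E w k c)"

end

theory Submission
  imports Defs
begin

definition PP :: "'a set \<Rightarrow> ('a \<times> 'a) set \<Rightarrow> ('a \<Rightarrow> nat) \<Rightarrow> ('a \<times> 'a) set" where
  "PP V E c = {(u,x). u \<in> V \<and> x \<in> V \<and> u \<in> und_nbrs E x \<and> c u = c x}"

definition QQ :: "'a set \<Rightarrow> ('a \<times> 'a) set \<Rightarrow> ('a \<Rightarrow> nat) \<Rightarrow> 'a \<Rightarrow> ('a \<times> 'a) set" where
  "QQ V E c v = {p \<in> PP V E c. fst p \<noteq> v \<and> snd p \<noteq> v}"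

lemma nb_sym: "u \<in> und_nbrs E x \<longleftrightarrow> x \<in> und_nbrs E u"
  unfolding und_nbrs_def by auto

lemma QQ_upd: "QQ V E (c(v:=j)) v = QQ V E c v"
  unfolding QQ_def PP_def by auto

lemma pot_card:
  assumes fin: "finite V" and nbV: "\<And>x. und_nbrs E x \<subseteq> V" and vV: "v \<in> V"
  shows "card (PP V E c) = card (QQ V E c v) + 2 * card {u \<in> und_nbrs E v. c u = c v}"
proof -
  let ?N = "{u \<in> und_nbrs E v. c u = c v}"
  define A where "A = (\<lambda>u. (u,v)) ` ?N"
  define B where "B = (\<lambda>x. (v,x)) ` ?N"
  have finN: "finite ?N" by (rule finite_subset[of _ V]) (use nbV[of v] fin in auto)
  have PPsub: "PP V E c \<subseteq> V \<times> V" unfolding PP_def by auto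
  have finP: "finite (PP V E c)" using PPsub fin by (meson finite_SigmaI finite_subset)
  have eq: "PP V E c = QQ V E c v \<union> A \<union> B"
  proof (rule set_eqI)
    fix p show "p \<in> PP V E c \<longleftrightarrow> p \<in> QQ V E c v \<union> A \<union> B"
    proof (cases p)
      case (Pair a b)
      show ?thesis using nbV vV unfolding Pair QQ_def A_def B_def PP_def
        by (auto simp: nb_sym[of v] intro: nb_sym[THEN iffD1])
    qed
  qed
  have nself: "\<And>x. x \<notin> und_nbrs E x" unfolding und_nbrs_def by auto
  have d1: "QQ V E c v \<inter> (A \<union> B) = {}" unfolding QQ_def A_def B_def by auto
  have d2: "A \<inter> B = {}" unfolding A_def B_def using nself by auto
  have finQ: "finite (QQ V E c v)" using finP unfolding QQ_def by auto
  have cA: "card A = card ?N" unfolding A_def by (rule card_image) (auto simp: inj_on_def)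
  have cB: "card B = card ?N" unfolding B_def by (rule card_image) (auto simp: inj_on_def)
  have finA: "finite A" "finite B" unfolding A_def B_def using finN by auto
  have "card (PP V E c) = card (QQ V E c v \<union> (A \<union> B))" using eq by (simp add: Un_assoc)
  also have "\<dots> = card (QQ V E c v) + card (A \<union> B)"
    using d1 finQ finA by (simp add: card_Un_disjoint)
  also have "card (A \<union> B) = card A + card B" using d2 finA by (simp add: card_Un_disjoint)
  finally show ?thesis using cA cB by simp
qed

theorem theorem3p3:
  fixes V :: "'a set" and E :: "('a \<times> 'a) set" and w :: "'a \<times> 'a \<Rightarrow> real"
    and wmax :: real and m :: nat
  assumes "weighted_digraph V E w"
    and "E \<noteq> {}"
    and "wmax = Max (w ` E)"
    and "wmax > 0"
    and "real m * wmax < 1"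
    and "\<forall>n::nat. real n * wmax < 1 \<longrightarrow> n \<le> m"
  shows "real (chi_w V E w)
           \<le> real_of_int \<lceil>real (und_max_degree V E) / real (m + 1)\<rceil> + 1"
proof -
  have finV: "finite V" and EV: "E \<subseteq> V \<times> V" and noloop: "\<And>v. (v,v) \<notin> E"
    using assms(1) unfolding weighted_digraph_def by auto
  have finE: "finite E" using finV EV by (meson finite_SigmaI finite_subset)
  have nbV: "\<And>x. und_nbrs E x \<subseteq> V" using EV unfolding und_nbrs_def by auto
  define D where "D = und_max_degree V E"
  have degD: "\<And>v. v \<in> V \<Longrightarrow> card (und_nbrs E v) \<le> D"
    unfolding D_def und_max_degree_def using finV by (auto intro: Max_ge)
  define K where "K = nat \<lceil>real D / real (m + 1)\<rceil> + 1"
  have Kge: "K \<ge> 1" unfolding K_def by simp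
  have "0 \<le> real D / real (m + 1)" by simp
  hence ceil0: "\<lceil>real D / real (m + 1)\<rceil> \<ge> 0" by (metis ceiling_mono ceiling_zero)
  have realK: "real K = real_of_int \<lceil>real D / real (m + 1)\<rceil> + 1"
    unfolding K_def using ceil0 by simp
  have DK: "D < K * (m + 1)"
  proof -
    have "real D / real (m+1) \<le> real_of_int \<lceil>real D / real (m + 1)\<rceil>" by (rule le_of_int_ceiling)
    hence "real D / real (m+1) * real (m+1) \<le> real_of_int \<lceil>real D / real (m + 1)\<rceil> * real (m+1)"
      by (rule mult_right_mono) simp
    hence "real D \<le> real_of_int \<lceil>real D / real (m + 1)\<rceil> * real (m+1)"
      by (simp del: of_nat_Suc)
    hence "real D < real K * real (m+1)" unfolding realK by (simp add: algebra_simps)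
    hence "real D < real (K * (m+1))" by (simp add: algebra_simps)
    thus ?thesis by linarith
  qed
  define Col where "Col = {c :: 'a \<Rightarrow> nat. \<forall>v\<in>V. c v \<in> {1..K}}"
  have "(\<lambda>_. 1) \<in> Col" unfolding Col_def using Kge by auto
  then obtain c where cCol: "c \<in> Col" and cmin: "\<And>c'. c' \<in> Col \<Longrightarrow> card (PP V E c) \<le> card (PP V E c')"
    using ex_has_least_nat[of "\<lambda>c. c \<in> Col" "\<lambda>_. 1" "\<lambda>c. card (PP V E c)"] by blast
  have Nbound: "card {u \<in> und_nbrs E v. c u = c v} \<le> m" if vV: "v \<in> V" for v
  proof (rule ccontr)
    let ?No = "card {u \<in> und_nbrs E v. c u = c v}"
    assume "\<not> ?thesis"
    hence big: "?No \<ge> m + 1" by simp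
    have allj: "card {u \<in> und_nbrs E v. c u = j} \<ge> ?No" if j: "j \<in> {1..K}" for j
    proof -
      have "c(v:=j) \<in> Col" using cCol j unfolding Col_def by auto
      hence le: "card (PP V E c) \<le> card (PP V E (c(v:=j)))" by (rule cmin)
      have e1: "{u \<in> und_nbrs E v. (c(v:=j)) u = (c(v:=j)) v} = {u \<in> und_nbrs E v. c u = j}"
        unfolding und_nbrs_def by auto
      have p1: "card (PP V E c) = card (QQ V E c v) + 2 * card {u \<in> und_nbrs E v. c u = c v}"
        by (rule pot_card[OF finV nbV vV])
      have p2: "card (PP V E (c(v:=j))) = card (QQ V E c v) + 2 * card {u \<in> und_nbrs E v. c u = j}"
        using pot_card[OF finV nbV vV, of "c(v:=j)"] unfolding e1 QQ_upd .
      show ?thesis using le p1 p2 by linarith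
    qed
    have finNb: "finite (und_nbrs E v)" using finV nbV finite_subset by blast
    have "card (und_nbrs E v) = (\<Sum>u\<in>und_nbrs E v. 1)" by simp
    also have "\<dots> = (\<Sum>j\<in>{1..K}. \<Sum>u\<in>{u \<in> und_nbrs E v. c u = j}. 1)"
      by (rule sum.group[symmetric]) (use finNb nbV[of v] cCol in \<open>auto simp: Col_def\<close>)
    also have "\<dots> = (\<Sum>j\<in>{1..K}. card {u \<in> und_nbrs E v. c u = j})" by simp
    also have "\<dots> \<ge> (\<Sum>j\<in>{1..K}. m + 1)"
      by (rule sum_mono) (use allj big in force)
    finally have "card (und_nbrs E v) \<ge> K * (m+1)" by simp
    thus False using degD[OF vV] DK by simp
  qed
  have wle: "\<And>e. e \<in> E \<Longrightarrow> w e \<le> wmax" using assms(3) finE by auto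
  have col: "weighted_improper_coloring V E w K c"
    unfolding weighted_improper_coloring_def
  proof (intro conjI ballI)
    fix v assume "v \<in> V" thus "c v \<in> {1..K}" using cCol unfolding Col_def by auto
  next
    fix v assume vV: "v \<in> V"
    let ?S = "{u \<in> color_class V c v. (u, v) \<in> E}"
    have Ssub: "?S \<subseteq> {u \<in> und_nbrs E v. c u = c v}"
      unfolding color_class_def und_nbrs_def using noloop by auto
    have finS: "finite ?S" using finV unfolding color_class_def by auto
    have cS: "card ?S \<le> m"
      proof -
      have "finite {u \<in> und_nbrs E v. c u = c v}"
        by (rule finite_subset[of _ V]) (use nbV[of v] finV in auto)
      thus ?thesis using card_mono[OF _ Ssub] Nbound[OF vV] by linarith
    qed
    have "in_wdeg E w (color_class V c v) v \<le> real (card ?S) * wmax"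
      unfolding in_wdeg_def by (rule sum_bounded_above) (use wle in auto)
    also have "\<dots> \<le> real m * wmax" using cS assms(4) by (simp add: mult_right_mono)
    also have "\<dots> < 1" by (rule assms(5))
    finally show "in_wdeg E w (color_class V c v) v < 1" .
  qed
  have "chi_w V E w \<le> K" unfolding chi_w_def by (rule Least_le) (use col in blast)
  thus ?thesis using realK unfolding D_def by simp
qed

end
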